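(* Let $\mathbb{T}=\mathbb{R}/\mathbb{Z}$ and let $u:\mathbb{T}\times[0,T]\to\mathbb{R}$ be smooth with $u_{xx}\in C(\mathbb{T}\times[0,T])$. Then there exists $C>0$ such that, when $\Delta t$ is sufficiently small, for all $n\in\{0,\dots,N-1\}$, $$\frac12\le\frac{1}{1+C\Delta t_n}\le|X^n|_{W^{1,\infty}(\mathbb{T})}\le1+C\Delta t_n\le\frac32,\qquad |X^n|_{W^{2,\infty}(\mathbb{T})}\le C\Delta t_n.$$
   Context: Temporal mesh $0=t^0<\dots<t^N=T$, $\Delta t_n=t^{n+1}-t^n$, $\Delta t=\max_n\Delta t_n$. $X^n(x)=x-\Delta t_n(\tfrac16k_1^n+\tfrac46k_2^n+\tfrac16k_3^n)(x)$ with $k_1^n(x)=u(x,t^{n+1})$, $k_2^n(x)=u(x-\tfrac{\Delta t_n}{2}k_1^n(x),t^{n+1}-\tfrac{\Delta t_n}{2})$, $k_3^n(x)=u(x-\Delta t_n(-k_1^n(x)+2k_2^n(x)),t^{n+1}-\Delta t_n)$. Seminorms: $|f|_{W^{m,\infty}(\mathbb{T})}=\|D^mf\|_{L^\infty(\mathbb{T})}$, $D=d/dx$. *)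

theory Defs
  imports "HOL-Analysis.Analysis"
begin

text \<open>Functions on the torus T = R/Z are represented by 1-periodic functions on R.
  A space-time function u is a curried function u x t, with t ranging over [0,T].\<close>

definition pdx :: "(real \<Rightarrow> real \<Rightarrow> real) \<Rightarrow> real \<Rightarrow> real \<Rightarrow> real" where
  "pdx f x t = deriv (\<lambda>y. f y t) x"

definition pdt :: "real \<Rightarrow> (real \<Rightarrow> real \<Rightarrow> real) \<Rightarrow> real \<Rightarrow> real \<Rightarrow> real" where
  "pdt T f x t = vector_derivative (\<lambda>s. f x s) (at t within {0..T})"

fun pd_iter :: "real \<Rightarrow> bool list \<Rightarrow> (real \<Rightarrow> real \<Rightarrow> real) \<Rightarrow> real \<Rightarrow> real \<Rightarrow> real" where
  "pd_iter T [] f = f"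
| "pd_iter T (d # ds) f = (if d then pdx (pd_iter T ds f) else pdt T (pd_iter T ds f))"

definition smooth_strip :: "real \<Rightarrow> (real \<Rightarrow> real \<Rightarrow> real) \<Rightarrow> bool" where
  "smooth_strip T u \<longleftrightarrow>
     (\<forall>ds. continuous_on (UNIV \<times> {0..T}) (\<lambda>p. pd_iter T ds u (fst p) (snd p)) \<and>
        (\<forall>x. \<forall>s\<in>{0..T}.
           ((\<lambda>y. pd_iter T ds u y s) has_real_derivative pdx (pd_iter T ds u) x s) (at x) \<and>
           ((\<lambda>r. pd_iter T ds u x r) has_real_derivative pdt T (pd_iter T ds u) x s)
              (at s within {0..T})))"

text \<open>The RK3 backward characteristic map X^n, with tn1 = t^{n+1}, dt = Delta t_n.\<close>
definition rk_map :: "(real \<Rightarrow> real \<Rightarrow> real) \<Rightarrow> real \<Rightarrow> real \<Rightarrow> real \<Rightarrow> real" where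
  "rk_map u tn1 dt x =
     (let k1 = u x tn1;
          k2 = u (x - dt / 2 * k1) (tn1 - dt / 2);
          k3 = u (x - dt * (- k1 + 2 * k2)) (tn1 - dt)
      in x - dt * (k1 / 6 + 4 / 6 * k2 + k3 / 6))"

text \<open>Seminorm |f|_{W^{m,infinity}} = sup |D^m f| (sup over a period = sup over R
  for the periodic functions considered).\<close>
definition W_semi :: "nat \<Rightarrow> (real \<Rightarrow> real) \<Rightarrow> real" where
  "W_semi m f = (SUP x. \<bar>(deriv ^^ m) f x\<bar>)"

definition mesh_max :: "(nat \<Rightarrow> real) \<Rightarrow> nat \<Rightarrow> real" where
  "mesh_max tt N = Max ((\<lambda>n. tt (Suc n) - tt n) ` {..<N})"

end

theory Submission
  imports Defs
begin

lemma abs_mult_le: fixes x y A B :: real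
  assumes "\<bar>x\<bar> \<le> A" "\<bar>y\<bar> \<le> B" shows "\<bar>x*y\<bar> \<le> A*B"
  using assms by (simp add: abs_mult mult_mono order_trans[OF abs_ge_zero])

lemma periodic_bound:
  fixes g :: "real \<Rightarrow> real"
  assumes per: "\<forall>y. g (y+1) = g y" and b: "\<forall>y\<in>{0..1}. \<bar>g y\<bar> \<le> B"
  shows "\<bar>g y\<bar> \<le> B"
proof -
  have pn: "g (z + real n) = g z" for z n
  proof (induction n)
    case (Suc n)
    have "g (z + real (Suc n)) = g ((z + real n) + 1)" by (simp add: algebra_simps)
    also have "\<dots> = g z" using per Suc by simp
    finally show ?case .
  qed simp
  have mn: "g (z - real n) = g z" for z n
    using pn[of "z - real n" n] by simp
  define f where "f = y - of_int (floor y)"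
  have f01: "f \<in> {0..1}" unfolding f_def using frac_lt_1[of y] frac_ge_0[of y] unfolding frac_def by auto
  have "g y = g f"
  proof (cases "floor y \<ge> 0")
    case True
    then have "y = f + real (nat (floor y))" unfolding f_def by simp
    then show ?thesis using pn by metis
  next
    case False
    then have "y = f - real (nat (- floor y))" unfolding f_def by simp
    then show ?thesis using mn by metis
  qed
  then show ?thesis using b f01 by simp
qed

lemma key_bounds:
  fixes a1 a2 a3 b1 b2 b3 dt K :: real
  assumes a1: "\<bar>a1\<bar> \<le> K" and a2: "\<bar>a2\<bar> \<le> K" and a3: "\<bar>a3\<bar> \<le> K"
    and b1: "\<bar>b1\<bar> \<le> K" and b2: "\<bar>b2\<bar> \<le> K" and b3: "\<bar>b3\<bar> \<le> K"
    and K: "1 \<le> K" and dt: "0 \<le> dt" "dt \<le> 1"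
  shows "\<bar>a1/6 + 4/6*(a2*(1 - dt/2*a1))
          + (a3*(1 - dt*(-a1 + 2*(a2*(1 - dt/2*a1)))))/6\<bar> \<le> 100*K^5"
   and "\<bar>b1/6 + 4/6*(b2*(1 - dt/2*a1)^2 + a2*(-dt/2*b1))
          + (b3*(1 - dt*(-a1 + 2*(a2*(1 - dt/2*a1))))^2
             + a3*(-dt*(-b1 + 2*(b2*(1 - dt/2*a1)^2 + a2*(-dt/2*b1)))))/6\<bar> \<le> 100*K^5"
proof -
  have K2: "K \<le> K^2" "K \<le> K^3" "K \<le> K^5" "K^2 \<le> K^3" "K^2 \<le> K^5" "K^3 \<le> K^5"
    using K power_increasing[of 1 2 K] power_increasing[of 1 3 K] power_increasing[of 1 5 K]
      power_increasing[of 2 3 K] power_increasing[of 2 5 K] power_increasing[of 3 5 K] by auto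
  define p2 where "p2 = 1 - dt/2*a1"
  have dta1: "\<bar>dt/2*a1\<bar> \<le> 1/2*K" using abs_mult_le[of "dt/2" "1/2" a1 K] dt a1 by simp
  have p2b: "\<bar>p2\<bar> \<le> 2*K" unfolding p2_def using dta1 K by linarith
  define c2 where "c2 = a2*p2"
  have c2b: "\<bar>c2\<bar> \<le> 2*K^2" unfolding c2_def using abs_mult_le[OF a2 p2b] by (simp add: power2_eq_square)
  define p3 where "p3 = 1 - dt*(-a1 + 2*c2)"
  have "\<bar>-a1 + 2*c2\<bar> \<le> 5*K^2" using a1 c2b K2 by linarith
  then have "\<bar>dt*(-a1 + 2*c2)\<bar> \<le> 1*(5*K^2)" using abs_mult_le[of dt 1] dt by simp
  then have p3b: "\<bar>p3\<bar> \<le> 6*K^2" unfolding p3_def using K K2 by linarith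
  define c3 where "c3 = a3*p3"
  have c3b: "\<bar>c3\<bar> \<le> 6*K^3" unfolding c3_def using abs_mult_le[OF a3 p3b] by (simp add: power3_eq_cube power2_eq_square)
  show "\<bar>a1/6 + 4/6*(a2*(1 - dt/2*a1))
          + (a3*(1 - dt*(-a1 + 2*(a2*(1 - dt/2*a1)))))/6\<bar> \<le> 100*K^5"
    using a1 c2b c3b K2 unfolding c3_def p3_def c2_def p2_def by linarith
  define q2 where "q2 = -dt/2*b1"
  have q2b: "\<bar>q2\<bar> \<le> K" unfolding q2_def using abs_mult_le[of "dt/2" "1/2" b1 K] dt b1 K by simp
  define e2 where "e2 = b2*p2^2 + a2*q2"
  have "\<bar>p2^2\<bar> \<le> 4*K^2" using abs_mult_le[OF p2b p2b] by (simp add: power2_eq_square)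
  then have "\<bar>b2*p2^2\<bar> \<le> K*(4*K^2)" using abs_mult_le[OF b2] by blast
  moreover have "K*(4*K^2) = 4*K^3" by (simp add: power2_eq_square power3_eq_cube)
  ultimately have "\<bar>b2*p2^2\<bar> \<le> 4*K^3" by simp
  moreover have "\<bar>a2*q2\<bar> \<le> K^2" using abs_mult_le[OF a2 q2b] by (simp add: power2_eq_square)
  ultimately have e2b: "\<bar>e2\<bar> \<le> 5*K^3" unfolding e2_def using K2 by linarith
  define q3 where "q3 = -dt*(-b1 + 2*e2)"
  have "\<bar>-b1 + 2*e2\<bar> \<le> 11*K^3" using b1 e2b K2 by linarith
  then have q3b: "\<bar>q3\<bar> \<le> 11*K^3" unfolding q3_def using abs_mult_le[of dt 1 _ "11*K^3"] dt by simp
  define e3 where "e3 = b3*p3^2 + a3*q3"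
  have "\<bar>p3^2\<bar> \<le> 36*K^4" using abs_mult_le[OF p3b p3b] by (simp add: power2_eq_square power4_eq_xxxx)
  then have "\<bar>b3*p3^2\<bar> \<le> K*(36*K^4)" using abs_mult_le[OF b3] by blast
  moreover have "\<bar>a3*q3\<bar> \<le> K*(11*K^3)" using abs_mult_le[OF a3 q3b] by blast
  moreover have "K*(36*K^4) = 36*K^5" "K*(11*K^3) = 11*K^4" by (simp_all add: power_Suc[symmetric] del: power_Suc)
  moreover have "K^4 \<le> K^5" using K by (intro power_increasing) auto
  moreover have "\<bar>e3\<bar> \<le> \<bar>b3*p3^2\<bar> + \<bar>a3*q3\<bar>" unfolding e3_def by (rule abs_triangle_ineq)
  ultimately have e3b: "\<bar>e3\<bar> \<le> 47*K^5" by linarith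
  have "\<bar>b1/6 + 4/6*e2 + e3/6\<bar> \<le> 100*K^5" using b1 e2b e3b K2 by linarith
  then show "\<bar>b1/6 + 4/6*(b2*(1 - dt/2*a1)^2 + a2*(-dt/2*b1))
          + (b3*(1 - dt*(-a1 + 2*(a2*(1 - dt/2*a1))))^2
             + a3*(-dt*(-b1 + 2*(b2*(1 - dt/2*a1)^2 + a2*(-dt/2*b1)))))/6\<bar> \<le> 100*K^5"
    unfolding e3_def q3_def e2_def q2_def p3_def c2_def p2_def by simp
qed

lemma rk_est:
  fixes u Ux Uxx :: "real \<Rightarrow> real \<Rightarrow> real" and T t1 dt K :: real
  assumes D0: "\<And>y s. s \<in> {0..T} \<Longrightarrow> ((\<lambda>y. u y s) has_real_derivative Ux y s) (at y)"
    and D1: "\<And>y s. s \<in> {0..T} \<Longrightarrow> ((\<lambda>y. Ux y s) has_real_derivative Uxx y s) (at y)"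
    and B0: "\<And>y s. s \<in> {0..T} \<Longrightarrow> \<bar>Ux y s\<bar> \<le> K"
    and B1: "\<And>y s. s \<in> {0..T} \<Longrightarrow> \<bar>Uxx y s\<bar> \<le> K"
    and K: "1 \<le> K" and dt: "0 \<le> dt" "dt \<le> 1"
    and t: "t1 \<in> {0..T}" "t1 - dt/2 \<in> {0..T}" "t1 - dt \<in> {0..T}"
  shows "\<bar>deriv (rk_map u t1 dt) x - 1\<bar> \<le> dt * (100*K^5)"
    and "\<bar>deriv (deriv (rk_map u t1 dt)) x\<bar> \<le> dt * (100*K^5)"
proof -
  define s2 where "s2 = t1 - dt/2"
  define s3 where "s3 = t1 - dt"
  define y2 where "y2 = (\<lambda>x. x - dt/2 * u x t1)"
  define k2 where "k2 = (\<lambda>x. u (y2 x) s2)"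
  define y3 where "y3 = (\<lambda>x. x - dt*(- u x t1 + 2 * k2 x))"
  define p2 where "p2 = (\<lambda>x. 1 - dt/2 * Ux x t1)"
  define c2 where "c2 = (\<lambda>x. Ux (y2 x) s2 * p2 x)"
  define p3 where "p3 = (\<lambda>x. 1 - dt*(- Ux x t1 + 2 * c2 x))"
  define c3 where "c3 = (\<lambda>x. Ux (y3 x) s3 * p3 x)"
  define X1 where "X1 = (\<lambda>x. 1 - dt*(Ux x t1/6 + 4/6*c2 x + c3 x/6))"
  define q2 where "q2 = (\<lambda>x. - dt/2 * Uxx x t1)"
  define e2 where "e2 = (\<lambda>x. Uxx (y2 x) s2 * (p2 x)^2 + Ux (y2 x) s2 * q2 x)"
  define q3 where "q3 = (\<lambda>x. - dt*(- Uxx x t1 + 2 * e2 x))"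
  define e3 where "e3 = (\<lambda>x. Uxx (y3 x) s3 * (p3 x)^2 + Ux (y3 x) s3 * q3 x)"
  define X2 where "X2 = (\<lambda>x. - dt*(Uxx x t1/6 + 4/6*e2 x + e3 x/6))"
  have s: "t1 \<in> {0..T}" "s2 \<in> {0..T}" "s3 \<in> {0..T}" using t unfolding s2_def s3_def by auto
  have Xeq: "rk_map u t1 dt = (\<lambda>x. x - dt*(u x t1/6 + 4/6*k2 x + u (y3 x) s3/6))"
    unfolding rk_map_def Let_def y3_def k2_def y2_def s2_def s3_def by simp
  have dk1: "((\<lambda>x. u x t1) has_real_derivative Ux x t1) (at x)" for x using D0 s by blast
  have dy2: "(y2 has_real_derivative p2 x) (at x)" for x
    unfolding y2_def p2_def by (auto intro!: derivative_eq_intros dk1)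
  have dk2: "(k2 has_real_derivative c2 x) (at x)" for x
    unfolding k2_def c2_def using DERIV_chain2[OF D0[OF s(2)] dy2] .
  have dy3: "(y3 has_real_derivative p3 x) (at x)" for x
    unfolding y3_def p3_def by (auto intro!: derivative_eq_intros dk1 dk2)
  have dk3: "((\<lambda>x. u (y3 x) s3) has_real_derivative c3 x) (at x)" for x
    unfolding c3_def using DERIV_chain2[OF D0[OF s(3)] dy3] .
  have dX: "(rk_map u t1 dt has_real_derivative X1 x) (at x)" for x
    unfolding Xeq X1_def by (auto intro!: derivative_eq_intros dk1 dk2 dk3)
  have dX': "deriv (rk_map u t1 dt) = X1" using dX DERIV_imp_deriv by blast
  have du1: "((\<lambda>x. Ux x t1) has_real_derivative Uxx x t1) (at x)" for x using D1 s by blast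
  have dp2: "(p2 has_real_derivative q2 x) (at x)" for x
    unfolding p2_def q2_def by (auto intro!: derivative_eq_intros du1)
  have dc2: "(c2 has_real_derivative e2 x) (at x)" for x
  proof -
    have "((\<lambda>x. Ux (y2 x) s2) has_real_derivative Uxx (y2 x) s2 * p2 x) (at x)"
      using DERIV_chain2[OF D1[OF s(2)] dy2] .
    from DERIV_mult[OF this dp2] show ?thesis unfolding c2_def e2_def
      by (rule DERIV_cong) (simp add: power2_eq_square algebra_simps)
  qed
  have dp3: "(p3 has_real_derivative q3 x) (at x)" for x
    unfolding p3_def q3_def by (auto intro!: derivative_eq_intros du1 dc2)
  have dc3: "(c3 has_real_derivative e3 x) (at x)" for x
  proof -
    have "((\<lambda>x. Ux (y3 x) s3) has_real_derivative Uxx (y3 x) s3 * p3 x) (at x)"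
      using DERIV_chain2[OF D1[OF s(3)] dy3] .
    from DERIV_mult[OF this dp3] show ?thesis unfolding c3_def e3_def
      by (rule DERIV_cong) (simp add: power2_eq_square algebra_simps)
  qed
  have dX1: "(X1 has_real_derivative X2 x) (at x)" for x
    unfolding X1_def X2_def by (auto intro!: derivative_eq_intros du1 dc2 dc3)
  have dX'': "deriv (deriv (rk_map u t1 dt)) = X2" unfolding dX' using dX1 DERIV_imp_deriv by blast
  note kb = key_bounds[OF B0[OF s(1)] B0[OF s(2)] B0[OF s(3)] B1[OF s(1)] B1[OF s(2)] B1[OF s(3)] K dt]
  have S1: "\<bar>Ux x t1/6 + 4/6*c2 x + c3 x/6\<bar> \<le> 100*K^5"
    using kb(1) unfolding c3_def p3_def c2_def p2_def by simp
  have S2: "\<bar>Uxx x t1/6 + 4/6*e2 x + e3 x/6\<bar> \<le> 100*K^5"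
    using kb(2) unfolding e3_def q3_def e2_def q2_def p3_def c2_def p2_def by simp
  show "\<bar>deriv (rk_map u t1 dt) x - 1\<bar> \<le> dt * (100*K^5)"
    unfolding dX' X1_def using mult_left_mono[OF S1 dt(1)] dt by (simp add: abs_mult)
  show "\<bar>deriv (deriv (rk_map u t1 dt)) x\<bar> \<le> dt * (100*K^5)"
    unfolding dX'' X2_def using mult_left_mono[OF S2 dt(1)] dt by (simp add: abs_mult)
qed

lemma strip_bound:
  fixes f :: "real \<Rightarrow> real \<Rightarrow> real"
  assumes c: "continuous_on (UNIV \<times> {0..T}) (\<lambda>p. f (fst p) (snd p))"
    and per: "\<forall>y. \<forall>s\<in>{0..T}. f (y+1) s = f y s"
  shows "\<exists>B. \<forall>y. \<forall>s\<in>{0..T}. \<bar>f y s\<bar> \<le> B"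
proof -
  have "continuous_on ({0..1} \<times> {0..T}) (\<lambda>p. f (fst p) (snd p))"
    by (rule continuous_on_subset[OF c]) auto
  then have "compact ((\<lambda>p. f (fst p) (snd p)) ` ({0..1} \<times> {0..T}))"
    by (intro compact_continuous_image compact_Times) auto
  then obtain B where B: "\<forall>z\<in>(\<lambda>p. f (fst p) (snd p)) ` ({0..1} \<times> {0..T}). norm z \<le> B"
    using compact_imp_bounded bounded_iff by metis
  have "\<bar>f y s\<bar> \<le> B" if s: "s \<in> {0..T}" for y s
  proof (rule periodic_bound[where g="\<lambda>y. f y s"])
    show "\<forall>y. f (y + 1) s = f y s" using per s by blast
    show "\<forall>y\<in>{0..1}. \<bar>f y s\<bar> \<le> B" using B s by force
  qed
  then show ?thesis by blast
qed

lemma deriv_periodic: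
  fixes f g :: "real \<Rightarrow> real"
  assumes d: "\<And>y. (f has_real_derivative g y) (at y)" and per: "\<forall>y. f (y+1) = f y"
  shows "g (x+1) = g x"
proof -
  have "(f has_real_derivative g (x+1)) (at (x+1))" by (rule d)
  then have "((\<lambda>y. f (y+1)) has_real_derivative g (x+1)) (at x)" using DERIV_shift by blast
  moreover have "(\<lambda>y. f (y+1)) = f" using per by auto
  ultimately have "(f has_real_derivative g (x+1)) (at x)" by simp
  then show ?thesis using d DERIV_unique by blast
qed

lemma mesh_mono:
  fixes tt :: "nat \<Rightarrow> real"
  assumes "\<forall>n<N. tt n < tt (Suc n)"
  shows "m \<le> k \<Longrightarrow> k \<le> N \<Longrightarrow> tt m \<le> tt k"
proof (induction k)
  case 0 then show ?case by simp
next
  case (Suc k)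
  show ?case
  proof (cases "m = Suc k")
    case False
    then have "tt m \<le> tt k" using Suc by simp
    moreover have "tt k < tt (Suc k)" using assms Suc.prems by simp
    ultimately show ?thesis by simp
  qed simp
qed

theorem lemma8:
  fixes u :: "real \<Rightarrow> real \<Rightarrow> real" and T :: real
  assumes "0 < T"
    and "\<forall>x. \<forall>t\<in>{0..T}. u (x + 1) t = u x t"
    and "smooth_strip T u"
    and "continuous_on (UNIV \<times> {0..T}) (\<lambda>p. pdx (pdx u) (fst p) (snd p))"
  shows "\<exists>C>0. \<exists>\<delta>>0. \<forall>(N::nat) (tt::nat \<Rightarrow> real).
           tt 0 = 0 \<and> tt N = T \<and> (\<forall>n<N. tt n < tt (Suc n)) \<and> mesh_max tt N < \<delta> \<longrightarrow>
           (\<forall>n<N. let dtn = tt (Suc n) - tt n; X = rk_map u (tt (Suc n)) dtn in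
              1 / 2 \<le> 1 / (1 + C * dtn) \<and> 1 / (1 + C * dtn) \<le> W_semi 1 X \<and>
              W_semi 1 X \<le> 1 + C * dtn \<and> 1 + C * dtn \<le> 3 / 2 \<and>
              W_semi 2 X \<le> C * dtn)"
proof -
  have SS: "continuous_on (UNIV \<times> {0..T}) (\<lambda>p. pd_iter T ds u (fst p) (snd p)) \<and>
        (\<forall>x. \<forall>s\<in>{0..T}.
           ((\<lambda>y. pd_iter T ds u y s) has_real_derivative pdx (pd_iter T ds u) x s) (at x))" for ds
    using assms(3) unfolding smooth_strip_def by blast
  have C0: "continuous_on (UNIV \<times> {0..T}) (\<lambda>p. pdx u (fst p) (snd p))"
   and D0: "\<And>y s. s \<in> {0..T} \<Longrightarrow> ((\<lambda>y. u y s) has_real_derivative pdx u y s) (at y)"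
    using SS[of "[True]"] SS[of "[]"] by auto
  have C1: "continuous_on (UNIV \<times> {0..T}) (\<lambda>p. pdx (pdx u) (fst p) (snd p))"
   and D1: "\<And>y s. s \<in> {0..T} \<Longrightarrow> ((\<lambda>y. pdx u y s) has_real_derivative pdx (pdx u) y s) (at y)"
    using SS[of "[True,True]"] SS[of "[True]"] by auto
  have P0: "\<forall>y. \<forall>s\<in>{0..T}. pdx u (y+1) s = pdx u y s"
  proof (intro allI ballI)
    fix y s assume s: "s \<in> {0..T}"
    show "pdx u (y+1) s = pdx u y s"
      by (rule deriv_periodic[where f="\<lambda>y. u y s" and g="\<lambda>y. pdx u y s"]) (use D0 s assms(2) in auto)
  qed
  have P1: "\<forall>y. \<forall>s\<in>{0..T}. pdx (pdx u) (y+1) s = pdx (pdx u) y s"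
  proof (intro allI ballI)
    fix y s assume s: "s \<in> {0..T}"
    show "pdx (pdx u) (y+1) s = pdx (pdx u) y s"
      by (rule deriv_periodic[where f="\<lambda>y. pdx u y s" and g="\<lambda>y. pdx (pdx u) y s"]) (use D1 s P0 in auto)
  qed
  obtain M1 where M1: "\<forall>y. \<forall>s\<in>{0..T}. \<bar>pdx u y s\<bar> \<le> M1" using strip_bound[OF C0 P0] by blast
  obtain M2 where M2: "\<forall>y. \<forall>s\<in>{0..T}. \<bar>pdx (pdx u) y s\<bar> \<le> M2" using strip_bound[OF C1 P1] by blast
  define K where "K = max 1 (max M1 M2)"
  have K: "1 \<le> K" unfolding K_def by simp
  have B0: "\<And>y s. s \<in> {0..T} \<Longrightarrow> \<bar>pdx u y s\<bar> \<le> K"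
  proof -
    fix y s assume "s \<in> {0..T}"
    then have "\<bar>pdx u y s\<bar> \<le> M1" using M1 by blast
    then show "\<bar>pdx u y s\<bar> \<le> K" unfolding K_def by linarith
  qed
  have B1: "\<And>y s. s \<in> {0..T} \<Longrightarrow> \<bar>pdx (pdx u) y s\<bar> \<le> K"
  proof -
    fix y s assume "s \<in> {0..T}"
    then have "\<bar>pdx (pdx u) y s\<bar> \<le> M2" using M2 by blast
    then show "\<bar>pdx (pdx u) y s\<bar> \<le> K" unfolding K_def by linarith
  qed
  define P where "P = 100*K^5"
  have P0': "0 \<le> P" unfolding P_def using K by simp
  define C where "C = 2*P + 1"
  have Cpos: "0 < C" unfolding C_def using P0' by simp
  define \<delta> where "\<delta> = min 1 (1/(2*C))"
  have dpos: "0 < \<delta>" unfolding \<delta>_def using Cpos by simp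
  have main: "let dtn = tt (Suc n) - tt n; X = rk_map u (tt (Suc n)) dtn in
              1 / 2 \<le> 1 / (1 + C * dtn) \<and> 1 / (1 + C * dtn) \<le> W_semi 1 X \<and>
              W_semi 1 X \<le> 1 + C * dtn \<and> 1 + C * dtn \<le> 3 / 2 \<and>
              W_semi 2 X \<le> C * dtn"
    if H: "tt 0 = 0 \<and> tt N = T \<and> (\<forall>n<N. tt n < tt (Suc n)) \<and> mesh_max tt N < \<delta>"
      and n: "n < N" for N :: nat and tt :: "nat \<Rightarrow> real" and n
  proof -
        define dt where "dt = tt (Suc n) - tt n"
    define X where "X = rk_map u (tt (Suc n)) dt"
    have dtpos: "0 < dt" unfolding dt_def using H n by simp
    have "dt \<le> mesh_max tt N" unfolding mesh_max_def dt_def using n by (intro Max_ge) auto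
    then have dtd: "dt < \<delta>" using H by simp
    then have dt1: "dt \<le> 1" and Cdt: "C * dt \<le> 1/2" unfolding \<delta>_def using Cpos
      by (auto simp: field_simps)
    have tn: "0 \<le> tt n" using mesh_mono[of N tt 0 n] H n by simp
    have tn1: "tt (Suc n) \<le> T" using mesh_mono[of N tt "Suc n" N] H n by simp
    have t: "tt (Suc n) \<in> {0..T}" "tt (Suc n) - dt/2 \<in> {0..T}" "tt (Suc n) - dt \<in> {0..T}"
      using tn tn1 dtpos unfolding dt_def by (auto simp: field_simps)
    note E = rk_est[where u=u and Ux="pdx u" and Uxx="pdx (pdx u)" and T=T, OF D0 D1 B0 B1 K less_imp_le[OF dtpos] dt1 t]
    have E1: "\<bar>deriv X x - 1\<bar> \<le> dt * P" for x using E(1) unfolding X_def P_def by blast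
    have E2: "\<bar>deriv (deriv X) x\<bar> \<le> dt * P" for x using E(2) unfolding X_def P_def by blast
    have W1: "W_semi 1 X = (SUP x. \<bar>deriv X x\<bar>)" unfolding W_semi_def by simp
    have W2: "W_semi 2 X = (SUP x. \<bar>deriv (deriv X) x\<bar>)" unfolding W_semi_def by (simp add: numeral_2_eq_2)
    have PC: "P * dt \<le> C * dt" unfolding C_def using dtpos P0' by (intro mult_right_mono) auto
    have up1: "W_semi 1 X \<le> 1 + C * dt" unfolding W1
    proof (rule cSUP_least)
      fix x show "\<bar>deriv X x\<bar> \<le> 1 + C * dt" using E1[of x] PC by (simp add: mult.commute)
    qed simp
    have up2: "W_semi 2 X \<le> C * dt" unfolding W2
    proof (rule cSUP_least)
      fix x show "\<bar>deriv (deriv X) x\<bar> \<le> C * dt" using E2[of x] PC by (simp add: mult.commute)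
    qed simp
    have bdd: "bdd_above (range (\<lambda>x. \<bar>deriv X x\<bar>))"
      by (rule bdd_aboveI2[where M="1 + dt*P"]) (use E1 in \<open>smt (verit)\<close>)
    have low0: "1 - dt * P \<le> W_semi 1 X" unfolding W1
      using E1[of 0] cSUP_upper[OF UNIV_I bdd, of 0] by linarith
    have "P * (C*dt) \<le> P * (1/2)" using Cdt P0' by (intro mult_left_mono) auto
    then have "0 \<le> dt*((P+1) - P*(C*dt))" using dtpos P0' by (intro mult_nonneg_nonneg) auto
    moreover have "(1 - dt*P) * (1 + C*dt) = 1 + dt*((P+1) - P*(C*dt))"
      unfolding C_def by (simp add: algebra_simps)
    ultimately have "1 \<le> (1 - dt*P) * (1 + C*dt)" by linarith
    moreover have pos [simp]: "0 < 1 + C*dt" using mult_pos_pos[OF Cpos dtpos] by linarith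
    ultimately have low1: "1 / (1 + C*dt) \<le> 1 - dt*P"
      by (simp add: pos_divide_le_eq)
    have h1: "1/2 \<le> 1 / (1 + C*dt)" unfolding pos_le_divide_eq[OF pos] distrib_left using Cdt by linarith
    show "let dtn = tt (Suc n) - tt n; X = rk_map u (tt (Suc n)) dtn in
              1 / 2 \<le> 1 / (1 + C * dtn) \<and> 1 / (1 + C * dtn) \<le> W_semi 1 X \<and>
              W_semi 1 X \<le> 1 + C * dtn \<and> 1 + C * dtn \<le> 3 / 2 \<and>
              W_semi 2 X \<le> C * dtn"
      unfolding Let_def dt_def[symmetric] X_def[symmetric]
      using h1 low0 low1 up1 up2 Cdt by linarith
  qed
  show ?thesis using main Cpos dpos by blast
qed

end
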